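(* Let $A$ be a nonempty set of positive integers, let $s\in A$ and let $n$ be a positive integer. Then $$\sum_{j\ge0}(-1)^jN^q_A(n-js)=N^q_{A\setminus\{s\}}(n)+\sum_{j\ge1}(-1)^{j-1}q_{A\setminus\{s\}}(n-js),$$ i.e. $N^q_A(n)-N^q_A(n-s)+N^q_A(n-2s)-\cdots=N^q_{A\setminus\{s\}}(n)+q_{A\setminus\{s\}}(n-s)-q_{A\setminus\{s\}}(n-2s)+\cdots$.
   Context: For a set $B$ of positive integers, $N^q_B(m)$ is the total number of parts, summed over all partitions of $m$ into pairwise distinct parts from $B$, and $q_B(m)$ is the number of such partitions. Conventions: $q_B(0)=1$, $N^q_B(0)=0$, $q_B(m)=N^q_B(m)=0$ for $m<0$. *)

theory Defs
  imports Main
begin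

definition distinct_partitions :: "nat set \<Rightarrow> nat \<Rightarrow> nat set set" where
  "distinct_partitions B m = {P. finite P \<and> P \<subseteq> B \<and> \<Sum>P = m}"

definition q_count :: "nat set \<Rightarrow> int \<Rightarrow> int" where
  "q_count B m = (if m < 0 then 0 else int (card (distinct_partitions B (nat m))))"

definition Nq_count :: "nat set \<Rightarrow> int \<Rightarrow> int" where
  "Nq_count B m = (if m < 0 then 0
     else int (\<Sum>P\<in>distinct_partitions B (nat m). card P))"

end

theory Submission
  imports Defs
begin

lemma dp_fin: "finite (distinct_partitions B m)"
proof (rule finite_subset[of _ "Pow {..m}"])
  show "distinct_partitions B m \<subseteq> Pow {..m}"
    unfolding distinct_partitions_def
    using member_le_sum[where f="\<lambda>x. x"] by fastforce
qed auto

lemma dp_split: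
  assumes "s \<in> A"
  shows "distinct_partitions A m = distinct_partitions (A - {s}) m \<union> {P \<in> distinct_partitions A m. s \<in> P}"
  unfolding distinct_partitions_def by auto

lemma dp_with_s_big:
  assumes "s \<in> A" "s \<le> m"
  shows "{P \<in> distinct_partitions A m. s \<in> P} = insert s ` distinct_partitions (A - {s}) (m - s)"
proof
  show "{P \<in> distinct_partitions A m. s \<in> P} \<subseteq> insert s ` distinct_partitions (A - {s}) (m - s)"
  proof
    fix P assume P: "P \<in> {P \<in> distinct_partitions A m. s \<in> P}"
    hence f: "finite P" and sub: "P \<subseteq> A" and sm: "\<Sum>P = m" and sP: "s \<in> P"
      by (auto simp: distinct_partitions_def)
    have "\<Sum>P = s + \<Sum>(P - {s})" using f sP by (simp add: sum.remove)
    hence "\<Sum>(P - {s}) = m - s" using sm by simp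
    hence "P - {s} \<in> distinct_partitions (A - {s}) (m - s)"
      using f sub by (auto simp: distinct_partitions_def)
    moreover have "P = insert s (P - {s})" using sP by auto
    ultimately show "P \<in> insert s ` distinct_partitions (A - {s}) (m - s)" by blast
  qed
next
  show "insert s ` distinct_partitions (A - {s}) (m - s) \<subseteq> {P \<in> distinct_partitions A m. s \<in> P}"
  proof
    fix P assume "P \<in> insert s ` distinct_partitions (A - {s}) (m - s)"
    then obtain Q where Q: "Q \<in> distinct_partitions (A - {s}) (m - s)" and PQ: "P = insert s Q" by blast
    hence f: "finite Q" and sub: "Q \<subseteq> A - {s}" and sm: "\<Sum>Q = m - s"
      by (auto simp: distinct_partitions_def)
    have "s \<notin> Q" using sub by blast
    hence "\<Sum>P = s + \<Sum>Q" using f PQ by simp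
    thus "P \<in> {P \<in> distinct_partitions A m. s \<in> P}"
      using sm assms f sub PQ by (auto simp: distinct_partitions_def)
  qed
qed

lemma dp_with_s_small:
  assumes "m < s"
  shows "{P \<in> distinct_partitions A m. s \<in> P} = {}"
proof -
  { fix P assume "P \<in> distinct_partitions A m" "s \<in> P"
    hence "s \<le> \<Sum>P" "\<Sum>P = m" using member_le_sum[where f="\<lambda>x. x" and i=s and A=P]
      by (auto simp: distinct_partitions_def)
    hence False using assms by simp }
  thus ?thesis by auto
qed

lemma inj_ins: "inj_on (insert s) (distinct_partitions (A - {s}) k)"
  unfolding inj_on_def distinct_partitions_def by blast

lemma key_nat:
  assumes "s \<in> A" "s \<le> m"
  shows "card (distinct_partitions A m) = card (distinct_partitions (A - {s}) m) + card (distinct_partitions (A - {s}) (m - s))"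
    and "(\<Sum>P\<in>distinct_partitions A m. card P) = (\<Sum>P\<in>distinct_partitions (A - {s}) m. card P)
          + (\<Sum>P\<in>distinct_partitions (A - {s}) (m - s). card P) + card (distinct_partitions (A - {s}) (m - s))"
proof -
  let ?X = "distinct_partitions (A - {s}) m" and ?Y = "distinct_partitions (A - {s}) (m - s)"
  have eq: "distinct_partitions A m = ?X \<union> insert s ` ?Y"
    using dp_split[OF assms(1), of m] dp_with_s_big[OF assms] by simp
  have disj: "?X \<inter> insert s ` ?Y = {}" unfolding distinct_partitions_def by auto
  have fX: "finite ?X" and fY: "finite ?Y" by (rule dp_fin)+
  show "card (distinct_partitions A m) = card ?X + card ?Y"
    unfolding eq using card_Un_disjoint[OF fX finite_imageI[OF fY] disj] card_image[OF inj_ins] by simp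
  have "(\<Sum>P\<in>distinct_partitions A m. card P) = (\<Sum>P\<in>?X. card P) + (\<Sum>P\<in>insert s ` ?Y. card P)"
    unfolding eq using sum.union_disjoint[OF fX finite_imageI[OF fY] disj] by simp
  also have "(\<Sum>P\<in>insert s ` ?Y. card P) = (\<Sum>P\<in>?Y. card (insert s P))"
    using sum.reindex[OF inj_ins] by simp
  also have "\<dots> = (\<Sum>P\<in>?Y. card P + 1)"
  proof (rule sum.cong)
    fix P assume "P \<in> ?Y"
    hence "finite P" "s \<notin> P" by (auto simp: distinct_partitions_def)
    thus "card (insert s P) = card P + 1" by simp
  qed simp
  also have "\<dots> = (\<Sum>P\<in>?Y. card P) + card ?Y" by (subst sum.distrib) simp
  finally show "(\<Sum>P\<in>distinct_partitions A m. card P) = (\<Sum>P\<in>?X. card P) + (\<Sum>P\<in>?Y. card P) + card ?Y"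
    by simp
qed

lemma key_int:
  assumes "s \<in> A" "s > 0"
  shows "Nq_count A m = Nq_count (A - {s}) m + Nq_count (A - {s}) (m - int s) + q_count (A - {s}) (m - int s)"
proof (cases "m < 0")
  case True thus ?thesis by (simp add: Nq_count_def q_count_def)
next
  case False
  show ?thesis
  proof (cases "m < int s")
    case True
    hence "nat m < s" using False by linarith
    hence "distinct_partitions A (nat m) = distinct_partitions (A - {s}) (nat m)"
      using dp_split[OF assms(1), of "nat m"] dp_with_s_small[of "nat m" s A] by simp
    thus ?thesis using True False by (simp add: Nq_count_def q_count_def)
  next
    case F2: False
    hence le: "s \<le> nat m" by simp
    have nn: "nat (m - int s) = nat m - s" using F2 by simp
    show ?thesis using key_nat[OF assms(1) le] F2 False nn by (simp add: Nq_count_def q_count_def)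
  qed
qed

lemma tele:
  fixes f :: "nat \<Rightarrow> int"
  shows "(\<Sum>j\<le>k. (-1)^j * (f j + f (Suc j))) = f 0 + (-1)^k * f (Suc k)"
  by (induction k) (auto simp: algebra_simps)

lemma shift:
  fixes g :: "nat \<Rightarrow> int"
  shows "(\<Sum>j\<le>k. (-1)^j * g (Suc j)) = (\<Sum>j\<in>{1..Suc k}. (-1)^(j-1) * g j)"
  by (induction k) auto

theorem theorem6:
  fixes A :: "nat set" and s n :: nat
  assumes "A \<noteq> {}" and "\<forall>a\<in>A. a > 0" and "s \<in> A" and "n > 0"
  shows "(\<Sum>j\<le>n. (-1)^j * Nq_count A (int n - int j * int s))
       = Nq_count (A - {s}) (int n)
         + (\<Sum>j\<in>{1..n}. (-1)^(j-1) * q_count (A - {s}) (int n - int j * int s))"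
proof -
  have sp: "s > 0" using assms by auto
  define f where "f j = Nq_count (A - {s}) (int n - int j * int s)" for j
  define g where "g j = q_count (A - {s}) (int n - int j * int s)" for j
  have neg: "int n - int (Suc n) * int s < 0"
  proof -
    have "n * 1 \<le> n * s" using sp by (intro mult_left_mono) auto
    hence "n < Suc n * s" using sp by (simp only: mult_Suc mult_1_right)
    hence "int n < int (Suc n * s)" by (simp only: of_nat_less_iff)
    thus ?thesis by (simp only: of_nat_mult)
  qed
  have f0: "f (Suc n) = 0" using neg by (simp add: f_def Nq_count_def)
  have g0: "g (Suc n) = 0" using neg by (simp add: g_def q_count_def)
  have rec: "Nq_count A (int n - int j * int s) = f j + f (Suc j) + g (Suc j)" for j
  proof -
    have "int n - int (Suc j) * int s = int n - int j * int s - int s" by (simp add: algebra_simps)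
    hence "f (Suc j) = Nq_count (A - {s}) (int n - int j * int s - int s)"
      "g (Suc j) = q_count (A - {s}) (int n - int j * int s - int s)"
      by (simp_all only: f_def g_def)
    thus ?thesis using key_int[OF assms(3) sp, of "int n - int j * int s"]
      by (simp only: f_def)
  qed
  have "(\<Sum>j\<le>n. (-1)^j * Nq_count A (int n - int j * int s))
      = (\<Sum>j\<le>n. (-1)^j * (f j + f (Suc j))) + (\<Sum>j\<le>n. (-1)^j * g (Suc j))"
    by (simp add: rec algebra_simps sum.distrib)
  also have "\<dots> = f 0 + (\<Sum>j\<in>{1..Suc n}. (-1)^(j-1) * g j)"
    by (simp add: tele shift f0)
  also have "(\<Sum>j\<in>{1..Suc n}. (-1)^(j-1) * g j) = (\<Sum>j\<in>{1..n}. (-1)^(j-1) * g j)"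
    by (simp add: g0)
  finally show ?thesis by (simp add: f_def g_def)
qed

end
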